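(* Suppose that the comparison equation $(-\Delta+V^0)\phi=0$ has a solution basis $\phi^\pm$ such that $\lim_{n \to \infty}\phi_n^- = 0$, $|\phi_n^+|$ is monotonically nondecreasing for sufficiently large $n$, and $\beta_n := (V_n - V^0_n)/W$ satisfies $\beta_n (1 + |\phi_n^+ \phi_n^-|^2) \in\ell^1$. Then for $N$ sufficiently large, ${\cal M}$ is a contraction on ${\cal B}_N$. Consequently, there exists a unique solution $\psi^-$ of $(-\Delta+V)\psi=0$ such that $\psi_n^- = a_n^+ \phi_n^+ + a_n^- \phi_n^-$, where $\lim_{n \to \infty}{a_n^+} = 0$ and $\lim_{n \to \infty}{a_n^-} = 1$. Moreover, if we define $\widehat{\psi}_n^- := \max_{m \ge n}{|\phi_m^-|}$, then $\psi_n^- = \phi_n^- + r_n \widehat{\psi}_n^-$, with $\lim_{n \to \infty}{r_n} = 0$.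
   Context: On the positive integers, $(\Delta f)_n = f_{n+1}+f_{n-1}-2f_n$, and one considers $(-\Delta+V)\psi=0$ and the comparison equation $(-\Delta+V^0)\phi=0$ with real potentials $V_n, V^0_n$. For independent solutions $\phi^\pm$ of the comparison equation, $W = \phi^-_n\phi^+_{n+1}-\phi^-_{n+1}\phi^+_n$ is their (constant) Wronskian and $\beta_n = (V_n-V^0_n)/W$. Solutions of $(-\Delta+V)\psi=0$ are written $\psi_n = a_n^+\phi_n^+ + a_n^-\phi_n^-$ with variable coefficients. The weighted Banach space is ${\cal B}_N=\{\mathbf{X}=(X^+_n,X^-_n)^T : \|\mathbf{X}\|_N := \sup_{n\ge N}(|(\phi^+_n)^2X^+_n|+|X^-_n|)<\infty\}$, and ${\cal M}$ is the linear operator $({\cal M}\mathbf{X})_n := \sum_{k=0}^\infty \beta_{n+k}\begin{pmatrix}\phi^+_{n+k}\phi^-_{n+k} & (\phi^-_{n+k})^2\\ -(\phi^+_{n+k})^2 & -\phi^+_{n+k}\phi^-_{n+k}\end{pmatrix}\mathbf{X}_{n+k}$; the coefficient vector $\mathbf{a}=(a^+_n,a^-_n)^T$ solves $\mathbf{a} = (0,1)^T - {\cal M}\mathbf{a}$. *)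

theory Defs
  imports "HOL-Analysis.Analysis"
begin

text \<open>Sequences are functions nat => real; the difference equations are imposed
for all n >= 1 (so that n - 1 is meaningful).\<close>

definition lap :: "(nat \<Rightarrow> real) \<Rightarrow> nat \<Rightarrow> real" where
  "lap f n = f (n + 1) + f (n - 1) - 2 * f n"

definition solves :: "(nat \<Rightarrow> real) \<Rightarrow> (nat \<Rightarrow> real) \<Rightarrow> bool" where
  "solves V f \<longleftrightarrow> (\<forall>n\<ge>1. - lap f n + V n * f n = 0)"

text \<open>Wronskian W = phi^-_n phi^+_(n+1) - phi^-_(n+1) phi^+_n (constant for solutions; taken at n = 0).\<close>
definition wronskian :: "(nat \<Rightarrow> real) \<Rightarrow> (nat \<Rightarrow> real) \<Rightarrow> real" where
  "wronskian pm pp = pm 0 * pp 1 - pm 1 * pp 0"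

definition beta :: "(nat \<Rightarrow> real) \<Rightarrow> (nat \<Rightarrow> real) \<Rightarrow> (nat \<Rightarrow> real) \<Rightarrow> (nat \<Rightarrow> real) \<Rightarrow> nat \<Rightarrow> real" where
  "beta V V0 pm pp n = (V n - V0 n) / wronskian pm pp"

definition BN_seq :: "(nat \<Rightarrow> real) \<Rightarrow> (nat \<Rightarrow> real \<times> real) \<Rightarrow> nat \<Rightarrow> real" where
  "BN_seq pp X n = \<bar>(pp n)\<^sup>2 * fst (X n)\<bar> + \<bar>snd (X n)\<bar>"

definition in_BN :: "(nat \<Rightarrow> real) \<Rightarrow> nat \<Rightarrow> (nat \<Rightarrow> real \<times> real) \<Rightarrow> bool" where
  "in_BN pp N X \<longleftrightarrow> bdd_above (BN_seq pp X ` {N..})"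

definition BN_norm :: "(nat \<Rightarrow> real) \<Rightarrow> nat \<Rightarrow> (nat \<Rightarrow> real \<times> real) \<Rightarrow> real" where
  "BN_norm pp N X = (SUP n\<in>{N..}. BN_seq pp X n)"

definition M_plus_term :: "(nat \<Rightarrow> real) \<Rightarrow> (nat \<Rightarrow> real) \<Rightarrow> (nat \<Rightarrow> real) \<Rightarrow> (nat \<Rightarrow> real)
    \<Rightarrow> (nat \<Rightarrow> real \<times> real) \<Rightarrow> nat \<Rightarrow> nat \<Rightarrow> real" where
  "M_plus_term V V0 pm pp X n k = beta V V0 pm pp (n + k) *
     (pp (n + k) * pm (n + k) * fst (X (n + k)) + (pm (n + k))\<^sup>2 * snd (X (n + k)))"

definition M_minus_term :: "(nat \<Rightarrow> real) \<Rightarrow> (nat \<Rightarrow> real) \<Rightarrow> (nat \<Rightarrow> real) \<Rightarrow> (nat \<Rightarrow> real)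
    \<Rightarrow> (nat \<Rightarrow> real \<times> real) \<Rightarrow> nat \<Rightarrow> nat \<Rightarrow> real" where
  "M_minus_term V V0 pm pp X n k = beta V V0 pm pp (n + k) *
     (- (pp (n + k))\<^sup>2 * fst (X (n + k)) - pp (n + k) * pm (n + k) * snd (X (n + k)))"

definition M_op :: "(nat \<Rightarrow> real) \<Rightarrow> (nat \<Rightarrow> real) \<Rightarrow> (nat \<Rightarrow> real) \<Rightarrow> (nat \<Rightarrow> real)
    \<Rightarrow> (nat \<Rightarrow> real \<times> real) \<Rightarrow> nat \<Rightarrow> real \<times> real" where
  "M_op V V0 pm pp X n =
     ((\<Sum>k. M_plus_term V V0 pm pp X n k), (\<Sum>k. M_minus_term V V0 pm pp X n k))"

definition M_contraction_on_BN :: "(nat \<Rightarrow> real) \<Rightarrow> (nat \<Rightarrow> real) \<Rightarrow> (nat \<Rightarrow> real) \<Rightarrow> (nat \<Rightarrow> real)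
    \<Rightarrow> nat \<Rightarrow> bool" where
  "M_contraction_on_BN V V0 pm pp N \<longleftrightarrow>
     (\<exists>q::real. 0 \<le> q \<and> q < 1 \<and>
        (\<forall>X. in_BN pp N X \<longrightarrow>
           (\<forall>n\<ge>N. summable (M_plus_term V V0 pm pp X n) \<and> summable (M_minus_term V V0 pm pp X n))
           \<and> in_BN pp N (M_op V V0 pm pp X)
           \<and> BN_norm pp N (M_op V V0 pm pp X) \<le> q * BN_norm pp N X))"

text \<open>Variable coefficients (variation of parameters) of psi w.r.t. phi^+-, for n >= 1:
  psi_n = a^+_n phi^+_n + a^-_n phi^-_n and psi_(n-1) = a^+_n phi^+_(n-1) + a^-_n phi^-_(n-1).
  These are exactly the coefficients satisfying a_(n+1) - a_n = beta_n K_n a_n, i.e. a = (0,1) - M a.\<close>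
definition coeff_plus :: "(nat \<Rightarrow> real) \<Rightarrow> (nat \<Rightarrow> real) \<Rightarrow> (nat \<Rightarrow> real) \<Rightarrow> nat \<Rightarrow> real" where
  "coeff_plus pm pp psi n = (pm (n - 1) * psi n - pm n * psi (n - 1)) / wronskian pm pp"

definition coeff_minus :: "(nat \<Rightarrow> real) \<Rightarrow> (nat \<Rightarrow> real) \<Rightarrow> (nat \<Rightarrow> real) \<Rightarrow> nat \<Rightarrow> real" where
  "coeff_minus pm pp psi n = (psi (n - 1) * pp n - psi n * pp (n - 1)) / wronskian pm pp"

definition psi_hat :: "(nat \<Rightarrow> real) \<Rightarrow> nat \<Rightarrow> real" where
  "psi_hat pm n = (SUP m\<in>{n..}. \<bar>pm m\<bar>)"

end

theory Submission
  imports Defs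
begin


lemma u_le1: "(u::real) \<le> 1 + u^2"
proof -
  have "(u - 1/2)^2 = u^2 - u + 1/4" by (simp add: power2_eq_square algebra_simps)
  moreover have "0 \<le> (u - 1/2)^2" by simp
  ultimately show ?thesis by linarith
qed

lemma u_le: "(u::real) \<ge> 0 \<Longrightarrow> B \<ge> 0 \<Longrightarrow> u*B + u^2*B \<le> 2*B*(1+u^2)"
proof -
  assume a: "(u::real) \<ge> 0" "B \<ge> 0"
  have "u*B \<le> (1+u^2)*B" using a u_le1[of u] by (intro mult_right_mono) auto
  moreover have "u^2*B \<le> (1+u^2)*B" using a by (intro mult_right_mono) auto
  ultimately show ?thesis by (simp add: algebra_simps)
qed

lemma u_le2: "(u::real) \<ge> 0 \<Longrightarrow> B \<ge> 0 \<Longrightarrow> B + u*B \<le> 2*B*(1+u^2)"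
proof -
  assume a: "(u::real) \<ge> 0" "B \<ge> 0"
  have "u*B \<le> (1+u^2)*B" using a u_le1[of u] by (intro mult_right_mono) auto
  moreover have "B \<le> (1+u^2)*B" using a by (simp add: algebra_simps)
  ultimately show ?thesis by (simp add: algebra_simps)
qed

lemma sq_abs_mult: "p^2 * \<bar>m^2*y\<bar> = (p*m)^2 * \<bar>y\<bar>" for p m y :: real
proof -
  have "\<bar>m^2*y\<bar> = m^2*\<bar>y\<bar>" by (simp add: abs_mult)
  then show ?thesis by (simp add: power_mult_distrib)
qed

lemma arith1:
  fixes P p m x y b B :: real
  assumes "\<bar>P\<bar> \<le> \<bar>p\<bar>" "\<bar>p^2 * x\<bar> + \<bar>y\<bar> \<le> B"
  shows "P^2 * \<bar>b * (p*m*x + m^2*y)\<bar> \<le> 2*B*\<bar>b * (1 + \<bar>p*m\<bar>^2)\<bar>"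
proof -
  define u where "u = \<bar>p*m\<bar>"
  have u0: "u \<ge> 0" by (simp add: u_def)
  have P2: "P^2 \<le> p^2" using assms(1) by (metis abs_ge_zero power2_abs power_mono)
  have X: "\<bar>p^2*x\<bar> \<le> B" "\<bar>y\<bar> \<le> B" using assms(2) by auto
  have "P^2 * \<bar>p*m*x\<bar> \<le> p^2 * \<bar>p*m*x\<bar>" using P2 by (simp add: mult_right_mono)
  also have "\<dots> = u * \<bar>p^2*x\<bar>" by (simp add: u_def abs_mult power2_eq_square)
  also have "\<dots> \<le> u * B" using X u0 by (simp add: mult_left_mono)
  finally have h1: "P^2 * \<bar>p*m*x\<bar> \<le> u * B" .
  have "P^2 * \<bar>m^2*y\<bar> \<le> p^2 * \<bar>m^2*y\<bar>" using P2 by (simp add: mult_right_mono)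
  also have "\<dots> = u^2 * \<bar>y\<bar>" by (simp add: sq_abs_mult u_def)
  also have "\<dots> \<le> u^2 * B" using X by (simp add: mult_left_mono)
  finally have h2: "P^2 * \<bar>m^2*y\<bar> \<le> u^2 * B" .
  have "P^2 * \<bar>b * (p*m*x + m^2*y)\<bar> = \<bar>b\<bar> * (P^2 * \<bar>p*m*x + m^2*y\<bar>)"
    by (simp add: abs_mult)
  also have "\<dots> \<le> \<bar>b\<bar> * (P^2 * \<bar>p*m*x\<bar> + P^2 * \<bar>m^2*y\<bar>)"
    by (intro mult_left_mono) (auto simp: distrib_left[symmetric] abs_triangle_ineq mult_left_mono)
  also have "\<dots> \<le> \<bar>b\<bar> * (u*B + u^2*B)" using h1 h2 by (intro mult_left_mono) auto
  also have "\<dots> \<le> \<bar>b\<bar> * (2*B*(1+u^2))"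
    using u_le[OF u0, of B] X by (intro mult_left_mono) auto
  also have "\<dots> = 2*B*\<bar>b * (1 + \<bar>p*m\<bar>^2)\<bar>" by (simp add: u_def abs_mult)
  finally show ?thesis .
qed

lemma arith2:
  fixes p m x y b B :: real
  assumes "\<bar>p^2 * x\<bar> + \<bar>y\<bar> \<le> B"
  shows "\<bar>b * (- (p\<^sup>2) * x - p*m*y)\<bar> \<le> 2*B*\<bar>b * (1 + \<bar>p*m\<bar>^2)\<bar>"
proof -
  define u where "u = \<bar>p*m\<bar>"
  have u0: "u \<ge> 0" by (simp add: u_def)
  have X: "\<bar>p^2*x\<bar> \<le> B" "\<bar>y\<bar> \<le> B" using assms by auto
  have "\<bar>p*m*y\<bar> = u * \<bar>y\<bar>" by (simp add: u_def abs_mult)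
  also have "\<dots> \<le> u * B" using X u0 by (simp add: mult_left_mono)
  finally have h2: "\<bar>p*m*y\<bar> \<le> u * B" .
  have B0: "B \<ge> 0" using X by linarith
  have "\<bar>b * (- (p\<^sup>2) * x - p*m*y)\<bar> = \<bar>b\<bar> * \<bar>- (p\<^sup>2) * x - p*m*y\<bar>" by (simp add: abs_mult)
  also have "\<dots> \<le> \<bar>b\<bar> * (\<bar>p^2*x\<bar> + \<bar>p*m*y\<bar>)"
    by (intro mult_left_mono) (auto simp: abs_triangle_ineq4)
  also have "\<dots> \<le> \<bar>b\<bar> * (B + u*B)" using X h2 by (intro mult_left_mono) auto
  also have "\<dots> \<le> \<bar>b\<bar> * (2*B*(1+u^2))"
    using u_le2[OF u0 B0] by (intro mult_left_mono) auto
  also have "\<dots> = 2*B*\<bar>b * (1 + \<bar>p*m\<bar>^2)\<bar>" by (simp add: u_def abs_mult)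
  finally show ?thesis .
qed

lemma arith3:
  fixes P p m x y b B H :: real
  assumes "\<bar>P\<bar> \<le> \<bar>p\<bar>" "\<bar>p^2 * x\<bar> + \<bar>y\<bar> \<le> B" "\<bar>m\<bar> \<le> H"
  shows "\<bar>P\<bar> * \<bar>b * (p*m*x + m^2*y)\<bar> \<le> 2*B*H*\<bar>b * (1 + \<bar>p*m\<bar>^2)\<bar>"
proof -
  define u where "u = \<bar>p*m\<bar>"
  have u0: "u \<ge> 0" by (simp add: u_def)
  have X: "\<bar>p^2*x\<bar> \<le> B" "\<bar>y\<bar> \<le> B" using assms(2) by auto
  have B0: "B \<ge> 0" using X by linarith
  have H0: "H \<ge> 0" using assms(3) by linarith
  have "\<bar>P\<bar> * \<bar>p*m*x\<bar> \<le> \<bar>p\<bar> * \<bar>p*m*x\<bar>" using assms(1) by (simp add: mult_right_mono)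
  also have "\<dots> = \<bar>m\<bar> * \<bar>p^2*x\<bar>" by (simp add: abs_mult power2_eq_square)
  also have "\<dots> \<le> H * B" using X assms(3) by (simp add: mult_mono)
  finally have h1: "\<bar>P\<bar> * \<bar>p*m*x\<bar> \<le> H * B" .
  have "\<bar>P\<bar> * \<bar>m^2*y\<bar> \<le> \<bar>p\<bar> * \<bar>m^2*y\<bar>" using assms(1) by (simp add: mult_right_mono)
  also have "\<dots> = \<bar>m\<bar> * (u * \<bar>y\<bar>)" by (simp add: u_def abs_mult power2_eq_square)
  also have "\<dots> \<le> H * (u * B)" using X assms(3) u0 by (intro mult_mono mult_left_mono) auto
  finally have h2: "\<bar>P\<bar> * \<bar>m^2*y\<bar> \<le> H * (u * B)" .
  have "\<bar>P\<bar> * \<bar>b * (p*m*x + m^2*y)\<bar> = \<bar>b\<bar> * (\<bar>P\<bar> * \<bar>p*m*x + m^2*y\<bar>)"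
    by (simp add: abs_mult)
  also have "\<dots> \<le> \<bar>b\<bar> * (\<bar>P\<bar> * \<bar>p*m*x\<bar> + \<bar>P\<bar> * \<bar>m^2*y\<bar>)"
    by (intro mult_left_mono) (auto simp: distrib_left[symmetric] abs_triangle_ineq mult_left_mono)
  also have "\<dots> \<le> \<bar>b\<bar> * (H * (B + u*B))" using h1 h2 by (intro mult_left_mono) (auto simp: algebra_simps)
  also have "\<dots> \<le> \<bar>b\<bar> * (H * (2*B*(1+u^2)))"
    using u_le2[OF u0 B0] H0 by (intro mult_left_mono) auto
  also have "\<dots> = 2*B*H*\<bar>b * (1 + \<bar>p*m\<bar>^2)\<bar>" by (simp add: u_def abs_mult)
  finally show ?thesis .
qed




lemma rec_step:
  assumes "solves V f"
  shows "f (Suc (Suc n)) = (2 + V (Suc n)) * f (Suc n) - f n"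
proof -
  have "- lap f (Suc n) + V (Suc n) * f (Suc n) = 0" using assms unfolding solves_def by auto
  then show ?thesis unfolding lap_def by (simp add: algebra_simps)
qed

lemma wr_const:
  assumes "solves V f" "solves V g"
  shows "f n * g (Suc n) - f (Suc n) * g n = f 0 * g 1 - f 1 * g 0"
proof (induction n)
  case 0 show ?case by simp
next
  case (Suc n)
  have "f (Suc n) * g (Suc (Suc n)) - f (Suc (Suc n)) * g (Suc n)
      = f n * g (Suc n) - f (Suc n) * g n"
    unfolding rec_step[OF assms(1)] rec_step[OF assms(2)] by (simp add: algebra_simps)
  then show ?case using Suc by simp
qed

lemma solves_lin:
  assumes "solves V f" "solves V g"
  shows "solves V (\<lambda>n. f n - c * g n)"
  using assms unfolding solves_def lap_def
proof (intro allI impI)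
  fix n :: nat assume n: "n \<ge> 1"
  assume a: "\<forall>n\<ge>1. - (f (n + 1) + f (n - 1) - 2 * f n) + V n * f n = 0"
     and b: "\<forall>n\<ge>1. - (g (n + 1) + g (n - 1) - 2 * g n) + V n * g n = 0"
  have A: "- (f (n + 1) + f (n - 1) - 2 * f n) + V n * f n = 0" using a n by blast
  have B: "- (g (n + 1) + g (n - 1) - 2 * g n) + V n * g n = 0" using b n by blast
  have "- (f (n + 1) - c * g (n + 1) + (f (n - 1) - c * g (n - 1)) - 2 * (f n - c * g n)) +
        V n * (f n - c * g n) = (- (f (n + 1) + f (n - 1) - 2 * f n) + V n * f n)
        - c * (- (g (n + 1) + g (n - 1) - 2 * g n) + V n * g n)" by (simp add: algebra_simps)
  also have "\<dots> = 0" by (simp only: A B)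
  finally show "- (f (n + 1) - c * g (n + 1) + (f (n - 1) - c * g (n - 1)) - 2 * (f n - c * g n)) +
        V n * (f n - c * g n) = 0" .
qed

lemma sol_zero:
  assumes "solves V E" "E k = 0" "E (Suc k) = 0"
  shows "E n = 0"
proof -
  have fw: "E (k + i) = 0 \<and> E (Suc (k + i)) = 0" for i
  proof (induction i)
    case 0 then show ?case using assms by simp
  next
    case (Suc i) then show ?case using rec_step[OF assms(1), of "k + i"] by simp
  qed
  have bw: "i \<le> k \<Longrightarrow> E (k - i) = 0 \<and> E (Suc (k - i)) = 0" for i
  proof (induction i)
    case 0 then show ?case using assms by simp
  next
    case (Suc i)
    then have IH: "E (k - i) = 0" "E (Suc (k - i)) = 0" by auto
    define j where "j = k - Suc i"
    have j1: "Suc j = k - i" and j2: "Suc (Suc j) = Suc (k - i)" using Suc.prems by (auto simp: j_def)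
    have "E (Suc (Suc j)) = (2 + V (Suc j)) * E (Suc j) - E j" by (rule rec_step[OF assms(1)])
    then have "E j = 0" using IH j1 j2 by simp
    then show ?case using IH j1 by (simp add: j_def)
  qed
  show ?thesis
  proof (cases "k \<le> n")
    case True then show ?thesis using fw[of "n - k"] by simp
  next
    case False then show ?thesis using bw[of "k - n"] by simp
  qed
qed

lemma extend:
  "\<forall>g. (\<forall>n\<ge>Suc N. - lap g n + V n * g n = 0) \<longrightarrow> (\<exists>f. solves V f \<and> (\<forall>n\<ge>N. f n = g n))"
proof (induction N)
  case 0 show ?case unfolding solves_def by (metis One_nat_def)
next
  case (Suc N)
  show ?case
  proof (intro allI impI)
    fix g :: "nat \<Rightarrow> real"
    assume H: "\<forall>n\<ge>Suc (Suc N). - lap g n + V n * g n = 0"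
    define g' where "g' = g(N := (2 + V (Suc N)) * g (Suc N) - g (Suc (Suc N)))"
    have "\<forall>n\<ge>Suc N. - lap g' n + V n * g' n = 0"
    proof (intro allI impI)
      fix n assume n: "n \<ge> Suc N"
      show "- lap g' n + V n * g' n = 0"
      proof (cases "n = Suc N")
        case True then show ?thesis by (simp add: lap_def g'_def algebra_simps)
      next
        case False
        then have "n \<ge> Suc (Suc N)" using n by simp
        moreover have "lap g' n = lap g n" "g' n = g n" using \<open>n \<ge> Suc (Suc N)\<close>
          by (auto simp: lap_def g'_def)
        ultimately show ?thesis using H by simp
      qed
    qed
    then obtain f where f: "solves V f" "\<forall>n\<ge>N. f n = g' n" using Suc.IH by blast
    show "\<exists>f. solves V f \<and> (\<forall>n\<ge>Suc N. f n = g n)"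
      using f by (intro exI[of _ f]) (auto simp: g'_def)
  qed
qed




lemma sum_bound:
  fixes f g :: "nat \<Rightarrow> real"
  assumes "summable g" "\<And>k. \<bar>f k\<bar> \<le> c * g k"
  shows "summable f" "\<bar>suminf f\<bar> \<le> c * suminf g"
proof -
  have sg: "summable (\<lambda>k. c * g k)" using assms(1) by (rule summable_mult)
  show sf: "summable f" using assms(2) by (intro summable_comparison_test'[OF sg]) auto
  have sa: "summable (\<lambda>k. \<bar>f k\<bar>)" using assms(2) by (intro summable_comparison_test'[OF sg]) auto
  have "\<bar>suminf f\<bar> \<le> (\<Sum>k. \<bar>f k\<bar>)" by (rule summable_rabs[OF sa])
  also have "\<dots> \<le> (\<Sum>k. c * g k)" by (intro suminf_le sa sg assms(2))
  also have "\<dots> = c * suminf g" by (rule suminf_mult[OF assms(1)])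
  finally show "\<bar>suminf f\<bar> \<le> c * suminf g" .
qed

lemma norm_pair_le: "norm (a::real, b::real) \<le> \<bar>a\<bar> + \<bar>b\<bar>"
  by (simp add: norm_Pair sqrt_sum_squares_le_sum_abs)

locale setting =
  fixes V V0 pm pp :: "nat \<Rightarrow> real" and n0 :: nat
  assumes sol_m: "solves V0 pm" and sol_p: "solves V0 pp"
    and basis: "wronskian pm pp \<noteq> 0"
    and lim_m: "pm \<longlonglongrightarrow> 0"
    and mono: "\<forall>n m. n0 \<le> n \<longrightarrow> n \<le> m \<longrightarrow> \<bar>pp n\<bar> \<le> \<bar>pp m\<bar>"
    and l1: "summable (\<lambda>n. \<bar>beta V V0 pm pp n * (1 + \<bar>pp n * pm n\<bar>\<^sup>2)\<bar>)"
begin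

abbreviation "W \<equiv> wronskian pm pp"

definition G where "G n = \<bar>beta V V0 pm pp n * (1 + \<bar>pp n * pm n\<bar>\<^sup>2)\<bar>"
definition T where "T n = (\<Sum>k. G (k + n))"

lemma W_const: "pm n * pp (Suc n) - pm (Suc n) * pp n = W"
  using wr_const[OF sol_m sol_p, of n] by (simp add: wronskian_def)

lemma G_nonneg: "G n \<ge> 0" by (simp add: G_def)
lemma G_summ: "summable G" using l1 by (simp add: G_def[abs_def])
lemma G_summ_shift: "summable (\<lambda>k. G (k + n))" by (rule summable_ignore_initial_segment[OF G_summ])

lemma T_nonneg: "T n \<ge> 0"
  unfolding T_def by (intro suminf_nonneg G_summ_shift G_nonneg)

lemma T_mono: assumes "N \<le> n" shows "T n \<le> T N"
proof -
  have "T N = (\<Sum>k. G (k + (n - N) + N)) + (\<Sum>i<n - N. G (i + N))"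
    unfolding T_def by (rule suminf_split_initial_segment[OF G_summ_shift])
  moreover have "(\<Sum>k. G (k + (n - N) + N)) = T n" unfolding T_def using assms
    by (simp add: add.assoc)
  moreover have "(\<Sum>i<n - N. G (i + N)) \<ge> 0" by (intro sum_nonneg G_nonneg)
  ultimately show ?thesis by linarith
qed

lemma T_lim: "T \<longlonglongrightarrow> 0"
proof -
  have "(\<lambda>n. suminf G - (\<Sum>i<n. G i)) \<longlonglongrightarrow> suminf G - suminf G"
    by (intro tendsto_intros summable_LIMSEQ G_summ)
  moreover have "T n = suminf G - (\<Sum>i<n. G i)" for n
    using suminf_split_initial_segment[OF G_summ, of n] by (simp add: T_def)
  ultimately show ?thesis by (simp add: T_def[abs_def])
qed

lemma pm_bdd: obtains Mm where "\<forall>n. \<bar>pm n\<bar> \<le> Mm"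
proof -
  have "Bseq pm" by (rule convergent_imp_Bseq) (use lim_m in \<open>auto simp: convergent_def\<close>)
  then obtain K where "\<forall>n. norm (pm n) \<le> K" by (auto simp: Bseq_def)
  then show ?thesis using that by auto
qed

lemma pp_nz: assumes "n0 < n" shows "pp n \<noteq> 0" "\<bar>pp (Suc n0)\<bar> \<le> \<bar>pp n\<bar>"
proof -
  show le: "\<bar>pp (Suc n0)\<bar> \<le> \<bar>pp n\<bar>" using mono assms by auto
  have "pp (Suc n0) \<noteq> 0"
  proof
    assume z: "pp (Suc n0) = 0"
    then have "\<bar>pp n0\<bar> \<le> 0" using mono by (metis abs_zero le_refl lessI less_imp_le)
    then have "pp n0 = 0" by simp
    then show False using W_const[of n0] z basis by simp
  qed
  then show "pp n \<noteq> 0" using le by auto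
qed

lemma hat_bdd: "bdd_above ((\<lambda>m. \<bar>pm m\<bar>) ` {n..})"
proof -
  obtain Mm where "\<forall>n. \<bar>pm n\<bar> \<le> Mm" by (rule pm_bdd)
  then show ?thesis by (intro bdd_aboveI2) auto
qed

lemma hat_ge: "n \<le> m \<Longrightarrow> \<bar>pm m\<bar> \<le> psi_hat pm n"
  unfolding psi_hat_def by (rule cSUP_upper[OF _ hat_bdd]) auto

lemma hat_pos: "psi_hat pm n > 0"
proof -
  have "pm n \<noteq> 0 \<or> pm (Suc n) \<noteq> 0" using W_const[of n] basis by auto
  then show ?thesis using hat_ge[of n n] hat_ge[of n "Suc n"] by auto
qed

end


context setting begin

lemma est_terms:
  assumes "n0 < N" "N \<le> n" "\<forall>j\<ge>N. BN_seq pp X j \<le> B"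
  shows "(pp n)^2 * \<bar>M_plus_term V V0 pm pp X n k\<bar> \<le> 2*B*G(k+n)"
    "\<bar>M_minus_term V V0 pm pp X n k\<bar> \<le> 2*B*G(k+n)"
    "\<bar>pp n\<bar> * \<bar>M_plus_term V V0 pm pp X n k\<bar> \<le> 2*B*psi_hat pm n*G(k+n)"
proof -
  define j where "j = n + k"
  have P: "\<bar>pp n\<bar> \<le> \<bar>pp j\<bar>" using mono assms by (auto simp: j_def)
  have XB: "\<bar>(pp j)^2 * fst (X j)\<bar> + \<bar>snd (X j)\<bar> \<le> B"
    using assms(3) assms(2) by (auto simp: BN_seq_def j_def)
  have H: "\<bar>pm j\<bar> \<le> psi_hat pm n" by (rule hat_ge) (simp add: j_def)
  have Gj: "G (k+n) = \<bar>beta V V0 pm pp j * (1 + \<bar>pp j * pm j\<bar>^2)\<bar>"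
    by (simp add: G_def j_def add.commute)
  show "(pp n)^2 * \<bar>M_plus_term V V0 pm pp X n k\<bar> \<le> 2*B*G(k+n)"
    unfolding M_plus_term_def Gj j_def[symmetric] by (rule arith1[OF P XB])
  show "\<bar>M_minus_term V V0 pm pp X n k\<bar> \<le> 2*B*G(k+n)"
    unfolding M_minus_term_def Gj j_def[symmetric] by (rule arith2[OF XB])
  show "\<bar>pp n\<bar> * \<bar>M_plus_term V V0 pm pp X n k\<bar> \<le> 2*B*psi_hat pm n*G(k+n)"
    unfolding M_plus_term_def Gj j_def[symmetric] by (rule arith3[OF P XB H])
qed

lemma est:
  assumes "n0 < N" "N \<le> n" "\<forall>j\<ge>N. BN_seq pp X j \<le> B"
  shows "summable (M_plus_term V V0 pm pp X n)" "summable (M_minus_term V V0 pm pp X n)"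
    "(pp n)^2 * \<bar>fst (M_op V V0 pm pp X n)\<bar> \<le> 2*B*T n"
    "\<bar>snd (M_op V V0 pm pp X n)\<bar> \<le> 2*B*T n"
    "\<bar>pp n * fst (M_op V V0 pm pp X n)\<bar> \<le> 2*B*psi_hat pm n*T n"
    "BN_seq pp (M_op V V0 pm pp X) n \<le> 4*B*T n"
proof -
  have nz: "pp n \<noteq> 0" using pp_nz assms by auto
  then have p2: "(pp n)^2 > 0" by simp
  have pa: "\<bar>pp n\<bar> > 0" using nz by simp
  note et = est_terms[OF assms]
  have b1: "\<bar>M_plus_term V V0 pm pp X n k\<bar> \<le> (2*B/(pp n)^2) * G (k+n)" for k
    using et(1)[of k] p2 by (simp add: field_simps)
  have b3: "\<bar>M_plus_term V V0 pm pp X n k\<bar> \<le> (2*B*psi_hat pm n/\<bar>pp n\<bar>) * G (k+n)" for k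
    using et(3)[of k] pa by (simp add: field_simps)
  have b2: "\<bar>M_minus_term V V0 pm pp X n k\<bar> \<le> (2*B) * G (k+n)" for k
    using et(2)[of k] by simp
  note s1 = sum_bound[OF G_summ_shift b1]
  note s2 = sum_bound[OF G_summ_shift b2]
  note s3 = sum_bound[OF G_summ_shift b3]
  show "summable (M_plus_term V V0 pm pp X n)" by (rule s1(1))
  show "summable (M_minus_term V V0 pm pp X n)" by (rule s2(1))
  have "(pp n)^2 * \<bar>fst (M_op V V0 pm pp X n)\<bar> \<le> (pp n)^2 * ((2*B/(pp n)^2) * T n)"
  proof (rule mult_left_mono)
    show "\<bar>fst (M_op V V0 pm pp X n)\<bar> \<le> (2*B/(pp n)^2) * T n"
      using s1(2) by (simp add: M_op_def T_def)
  qed simp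
  also have "\<dots> = 2*B*T n" using p2 by (simp add: field_simps)
  finally show A1: "(pp n)^2 * \<bar>fst (M_op V V0 pm pp X n)\<bar> \<le> 2*B*T n" .
  show A2: "\<bar>snd (M_op V V0 pm pp X n)\<bar> \<le> 2*B*T n"
    using s2(2) by (simp add: M_op_def T_def)
  have "\<bar>pp n * fst (M_op V V0 pm pp X n)\<bar> \<le> \<bar>pp n\<bar> * ((2*B*psi_hat pm n/\<bar>pp n\<bar>) * T n)"
    unfolding abs_mult
  proof (rule mult_left_mono)
    show "\<bar>fst (M_op V V0 pm pp X n)\<bar> \<le> (2*B*psi_hat pm n/\<bar>pp n\<bar>) * T n"
      using s3(2) by (simp add: M_op_def T_def)
  qed simp
  also have "\<dots> = 2*B*psi_hat pm n*T n" using pa by (simp add: field_simps)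
  finally show "\<bar>pp n * fst (M_op V V0 pm pp X n)\<bar> \<le> 2*B*psi_hat pm n*T n" .
  show "BN_seq pp (M_op V V0 pm pp X) n \<le> 4*B*T n"
    using A1 A2 by (simp add: BN_seq_def abs_mult)
qed

lemma contraction:
  assumes "n0 < N" "T N \<le> 1/8"
  shows "M_contraction_on_BN V V0 pm pp N"
proof -
  have main: "(\<forall>n\<ge>N. summable (M_plus_term V V0 pm pp X n) \<and> summable (M_minus_term V V0 pm pp X n))
     \<and> in_BN pp N (M_op V V0 pm pp X)
     \<and> BN_norm pp N (M_op V V0 pm pp X) \<le> 1/2 * BN_norm pp N X" if X: "in_BN pp N X" for X
  proof (intro conjI)
    define B where "B = BN_norm pp N X"
    have XB: "\<forall>j\<ge>N. BN_seq pp X j \<le> B"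
      using X unfolding B_def BN_norm_def in_BN_def by (auto intro: cSUP_upper)
    have B0: "B \<ge> 0" using XB[rule_format, of N] by (simp add: BN_seq_def)
    show "\<forall>n\<ge>N. summable (M_plus_term V V0 pm pp X n) \<and> summable (M_minus_term V V0 pm pp X n)"
      using est(1,2)[OF assms(1) _ XB] by blast
    have bd: "BN_seq pp (M_op V V0 pm pp X) n \<le> B/2" if "n \<ge> N" for n
    proof -
      have "BN_seq pp (M_op V V0 pm pp X) n \<le> 4*B*T n" using est(6)[OF assms(1) that XB] .
      also have "\<dots> \<le> 4*B*T N" using T_mono[OF that] B0 by (simp add: mult_left_mono)
      also have "\<dots> \<le> B/2"
      proof -
        have "B * T N \<le> B * (1/8)" using assms(2) B0 by (rule mult_left_mono)
        then show ?thesis by linarith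
      qed
      finally show ?thesis .
    qed
    show "in_BN pp N (M_op V V0 pm pp X)" unfolding in_BN_def
      using bd by (intro bdd_aboveI2[where M="B/2"]) auto
    show "BN_norm pp N (M_op V V0 pm pp X) \<le> 1/2 * BN_norm pp N X"
      unfolding BN_norm_def[of _ _ "M_op V V0 pm pp X"] B_def[symmetric]
      using bd by (intro cSUP_least) auto
  qed
  show ?thesis unfolding M_contraction_on_BN_def
    using main by (intro exI[of _ "1/2"]) auto
qed

end



lemma complete_bc: "complete (UNIV :: (nat \<Rightarrow>\<^sub>C (real \<times> real)) set)"
  unfolding complete_def
proof (intro allI impI)
  fix f :: "nat \<Rightarrow> (nat \<Rightarrow>\<^sub>C (real \<times> real))"
  assume "(\<forall>n. f n \<in> UNIV) \<and> Cauchy f"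
  then have C: "Cauchy f" by blast
  have "\<forall>e>0. \<exists>M. \<forall>m n x. M \<le> m \<and> M \<le> n \<and> True \<longrightarrow> dist (apply_bcontfun (f m) x) (apply_bcontfun (f n) x) < e"
    using C unfolding Cauchy_def by (metis dist_fun_lt_imp_dist_val_lt)
  then obtain g where "\<forall>e>0. \<exists>M. \<forall>n x. M \<le> n \<and> True \<longrightarrow> dist (apply_bcontfun (f n) x) (g x) < e"
    using uniformly_convergent_eq_cauchy[where P="\<lambda>_. True" and s="\<lambda>n. apply_bcontfun (f n)"] by auto
  then have "uniform_limit UNIV (\<lambda>n. apply_bcontfun (f n)) g sequentially"
    unfolding uniform_limit_sequentially_iff by auto
  from uniform_limit_bcontfunE[OF this sequentially_bot]
  obtain l' where "g = apply_bcontfun l'" "(f \<longlonglongrightarrow> l')" by metis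
  then show "\<exists>l\<in>UNIV. f \<longlonglongrightarrow> l" by blast
qed

lemma fs_le: "\<bar>fst z\<bar> \<le> norm z" "\<bar>snd z\<bar> \<le> norm (z::real\<times>real)"
  by (cases z; simp add: norm_Pair)+

lemma norm_pair_le': "norm (z::real\<times>real) \<le> \<bar>fst z\<bar> + \<bar>snd z\<bar>"
  by (cases z) (simp add: norm_pair_le)

lemma M_op_diff:
  assumes "summable (M_plus_term V V0 pm pp X n)" "summable (M_minus_term V V0 pm pp X n)"
    "summable (M_plus_term V V0 pm pp Y n)" "summable (M_minus_term V V0 pm pp Y n)"
  defines "D \<equiv> (\<lambda>m. (fst (X m) - fst (Y m), snd (X m) - snd (Y m)))"
  shows "fst (M_op V V0 pm pp X n) - fst (M_op V V0 pm pp Y n) = fst (M_op V V0 pm pp D n)"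
    "snd (M_op V V0 pm pp X n) - snd (M_op V V0 pm pp Y n) = snd (M_op V V0 pm pp D n)"
proof -
  have "M_plus_term V V0 pm pp X n k - M_plus_term V V0 pm pp Y n k = M_plus_term V V0 pm pp D n k" for k
    by (simp add: M_plus_term_def D_def algebra_simps)
  then show "fst (M_op V V0 pm pp X n) - fst (M_op V V0 pm pp Y n) = fst (M_op V V0 pm pp D n)"
    using suminf_diff[OF assms(1,3)] by (simp add: M_op_def)
  have "M_minus_term V V0 pm pp X n k - M_minus_term V V0 pm pp Y n k = M_minus_term V V0 pm pp D n k" for k
    by (simp add: M_minus_term_def D_def algebra_simps)
  then show "snd (M_op V V0 pm pp X n) - snd (M_op V V0 pm pp Y n) = snd (M_op V V0 pm pp D n)"
    using suminf_diff[OF assms(2,4)] by (simp add: M_op_def)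
qed

context setting begin

lemma exist_fp:
  assumes N: "n0 < N" "T N \<le> 1/16"
  obtains a B where "\<forall>j\<ge>N. BN_seq pp a j \<le> B"
    "\<forall>n\<ge>N. fst (a n) = - fst (M_op V V0 pm pp a n)"
    "\<forall>n\<ge>N. snd (a n) = 1 - snd (M_op V V0 pm pp a n)"
proof -
  define unw where "unw y = (\<lambda>m. (fst (apply_bcontfun y (m - N)) / (pp m)^2, snd (apply_bcontfun y (m - N))))"
    for y :: "nat \<Rightarrow>\<^sub>C (real \<times> real)"
  define Fm where "Fm y = (\<lambda>k. (- ((pp (N+k))^2 * fst (M_op V V0 pm pp (unw y) (N+k))),
       1 - snd (M_op V V0 pm pp (unw y) (N+k))))" for y
  have nz: "pp j \<noteq> 0" if "j \<ge> N" for j using pp_nz N that by auto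
  have unw_bd: "\<forall>j\<ge>N. BN_seq pp (unw y) j \<le> 2 * norm y" for y
  proof (intro allI impI)
    fix j assume j: "j \<ge> N"
    define z where "z = apply_bcontfun y (j - N)"
    have "BN_seq pp (unw y) j = \<bar>fst z\<bar> + \<bar>snd z\<bar>"
      using nz[OF j] by (simp add: BN_seq_def unw_def z_def)
    also have "\<dots> \<le> norm z + norm z"
      by (intro add_mono fs_le)
    also have "\<dots> \<le> 2 * norm y" using norm_bounded[of y "j - N"] by (simp add: z_def)
    finally show "BN_seq pp (unw y) j \<le> 2 * norm y" .
  qed
  have Fm_bound: "\<bar>fst (Fm y k)\<bar> + \<bar>snd (Fm y k)\<bar> \<le> 1 + BN_seq pp (M_op V V0 pm pp (unw y)) (N+k)" for y k
    by (simp add: Fm_def BN_seq_def abs_mult)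
  have Fm_bc: "Fm y \<in> bcontfun" for y
  proof (rule bcontfun_normI)
    show "continuous_on UNIV (Fm y)" by (simp add: continuous_on_discrete)
    fix k
    have "norm (Fm y k) \<le> \<bar>fst (Fm y k)\<bar> + \<bar>snd (Fm y k)\<bar>"
      using norm_pair_le[of "fst (Fm y k)" "snd (Fm y k)"] by simp
    also have "\<dots> \<le> 1 + 4 * (2 * norm y) * T (N+k)"
      using Fm_bound[of y k] est(6)[OF N(1) _ unw_bd[of y], of "N+k"] by simp
    also have "\<dots> \<le> 1 + 4 * (2 * norm y) * T N"
      using T_mono[of N "N+k"] by (simp add: mult_left_mono)
    finally show "norm (Fm y k) \<le> 1 + 4 * (2 * norm y) * T N" .
  qed
  define Top where "Top y = Bcontfun (Fm y)" for y
  have Top_app: "apply_bcontfun (Top y) = Fm y" for y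
    using Fm_bc[of y] by (simp add: Top_def Bcontfun_inverse)
  have contr: "dist (Top y) (Top z) \<le> 1/2 * dist y z" for y z
  proof (rule dist_bound)
    fix k
    define D where "D = (\<lambda>m. (fst (unw y m) - fst (unw z m), snd (unw y m) - snd (unw z m)))"
    have Dbd: "\<forall>j\<ge>N. BN_seq pp D j \<le> 2 * dist y z"
    proof (intro allI impI)
      fix j assume j: "j \<ge> N"
      define u where "u = apply_bcontfun y (j - N) - apply_bcontfun z (j - N)"
      have "BN_seq pp D j = \<bar>fst u\<bar> + \<bar>snd u\<bar>"
        using nz[OF j] by (simp add: BN_seq_def D_def unw_def u_def diff_divide_distrib[symmetric])
      also have "\<dots> \<le> norm u + norm u"
        by (intro add_mono fs_le)
      also have "\<dots> \<le> 2 * dist y z" using dist_bounded[of y "j - N" z]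
        by (simp add: u_def dist_norm)
      finally show "BN_seq pp D j \<le> 2 * dist y z" .
    qed
    note ey = est[OF N(1) _ unw_bd[of y], of "N+k"]
    note ez = est[OF N(1) _ unw_bd[of z], of "N+k"]
    note dd = M_op_diff[OF ey(1) ey(2) ez(1) ez(2), folded D_def]
    have "dist (Fm y k) (Fm z k) = norm (Fm y k - Fm z k)" by (simp add: dist_norm)
    also have "\<dots> \<le> \<bar>fst (Fm y k - Fm z k)\<bar> + \<bar>snd (Fm y k - Fm z k)\<bar>"
      by (rule norm_pair_le')
    also have "\<dots> = BN_seq pp (M_op V V0 pm pp D) (N+k)"
    proof -
      have "fst (Fm y k - Fm z k) = - ((pp (N+k))^2 * fst (M_op V V0 pm pp D (N+k)))"
        using dd(1) by (simp add: Fm_def algebra_simps)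
      moreover have "snd (Fm y k - Fm z k) = - snd (M_op V V0 pm pp D (N+k))"
        using dd(2) by (simp add: Fm_def algebra_simps)
      ultimately show ?thesis by (simp add: BN_seq_def)
    qed
    also have "\<dots> \<le> 4 * (2 * dist y z) * T (N+k)" using est(6)[OF N(1) _ Dbd, of "N+k"] by simp
    also have "\<dots> \<le> 4 * (2 * dist y z) * T N"
      using T_mono[of N "N+k"] by (simp add: mult_left_mono)
    also have "\<dots> \<le> 1/2 * dist y z"
    proof -
      have "dist y z * T N \<le> dist y z * (1/16)" using N(2) by (intro mult_left_mono) auto
      then show ?thesis by linarith
    qed
    finally show "dist (apply_bcontfun (Top y) k) (apply_bcontfun (Top z) k) \<le> 1/2 * dist y z"
      by (simp add: Top_app)
  qed
  obtain y where fp: "Top y = y"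
    using Banach_fix[OF complete_bc UNIV_not_empty, of "1/2" Top] contr by auto
  define a where "a = unw y"
  have yk: "apply_bcontfun y k = Fm y k" for k
  proof -
    have "apply_bcontfun (Top y) k = Fm y k" by (simp add: Top_app)
    then show ?thesis using fp by simp
  qed
  have an: "a n = (- fst (M_op V V0 pm pp a n), 1 - snd (M_op V V0 pm pp a n))" if n: "n \<ge> N" for n
  proof -
    have "a n = (fst (Fm y (n - N)) / (pp n)^2, snd (Fm y (n - N)))"
      unfolding a_def unw_def yk[of "n - N"] by simp
    also have "\<dots> = (- fst (M_op V V0 pm pp a n), 1 - snd (M_op V V0 pm pp a n))"
      using n nz[OF n] unfolding Fm_def a_def by simp
    finally show ?thesis .
  qed
  show ?thesis
  proof (rule that[of a "2 * norm y"])
    show "\<forall>j\<ge>N. BN_seq pp a j \<le> 2 * norm y" using unw_bd by (simp add: a_def)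
    show "\<forall>n\<ge>N. fst (a n) = - fst (M_op V V0 pm pp a n)" using an by simp
    show "\<forall>n\<ge>N. snd (a n) = 1 - snd (M_op V V0 pm pp a n)" using an by simp
  qed
qed

end


context setting begin

lemma existence:
  obtains psi where "solves V psi" "coeff_plus pm pp psi \<longlonglongrightarrow> 0" "coeff_minus pm pp psi \<longlonglongrightarrow> 1"
    "\<exists>r. r \<longlonglongrightarrow> 0 \<and> (\<forall>n. psi n = pm n + r n * psi_hat pm n)"
proof -
  have "eventually (\<lambda>n. T n < 1/16) sequentially"
    using order_tendstoD(2)[OF T_lim, of "1/16"] by simp
  then obtain M where M: "\<forall>n\<ge>M. T n < 1/16" by (auto simp: eventually_sequentially)
  define N where "N = max M (Suc n0)"
  have NM: "N \<ge> M" by (simp add: N_def)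
  have N: "n0 < N" "T N \<le> 1/16" using M[rule_format, OF NM] by (auto simp: N_def)
  obtain a B where XB: "\<forall>j\<ge>N. BN_seq pp a j \<le> B"
    and fa: "\<forall>n\<ge>N. fst (a n) = - fst (M_op V V0 pm pp a n)"
    and sa: "\<forall>n\<ge>N. snd (a n) = 1 - snd (M_op V V0 pm pp a n)"
    using exist_fp[OF N] by blast
  have B0: "B \<ge> 0" using XB[rule_format, of N] by (simp add: BN_seq_def)
  note es = est[OF N(1) _ XB]
  have ps: "fst (a (Suc n)) - fst (a n) = M_plus_term V V0 pm pp a n 0" if n: "n \<ge> N" for n
  proof -
    have s: "summable (M_plus_term V V0 pm pp a n)" using es(1)[OF n] .
    have sh: "(\<lambda>k. M_plus_term V V0 pm pp a n (Suc k)) = M_plus_term V V0 pm pp a (Suc n)"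
      by (rule ext) (simp add: M_plus_term_def)
    have "fst (M_op V V0 pm pp a (Suc n)) = fst (M_op V V0 pm pp a n) - M_plus_term V V0 pm pp a n 0"
      using suminf_split_head[OF s] by (simp add: M_op_def sh)
    then show ?thesis using fa n by simp
  qed
  have ms: "snd (a (Suc n)) - snd (a n) = M_minus_term V V0 pm pp a n 0" if n: "n \<ge> N" for n
  proof -
    have s: "summable (M_minus_term V V0 pm pp a n)" using es(2)[OF n] .
    have sh: "(\<lambda>k. M_minus_term V V0 pm pp a n (Suc k)) = M_minus_term V V0 pm pp a (Suc n)"
      by (rule ext) (simp add: M_minus_term_def)
    have "snd (M_op V V0 pm pp a (Suc n)) = snd (M_op V V0 pm pp a n) - M_minus_term V V0 pm pp a n 0"
      using suminf_split_head[OF s] by (simp add: M_op_def sh)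
    then show ?thesis using sa n by simp
  qed
  define g where "g n = fst (a n) * pp n + snd (a n) * pm n" for n
  have gsh: "g n = fst (a (Suc n)) * pp n + snd (a (Suc n)) * pm n" if n: "n \<ge> N" for n
  proof -
    have "M_plus_term V V0 pm pp a n 0 * pp n + M_minus_term V V0 pm pp a n 0 * pm n = 0"
      by (simp add: M_plus_term_def M_minus_term_def algebra_simps power2_eq_square)
    then show ?thesis using ps[OF n] ms[OF n] unfolding g_def
      by (simp add: algebra_simps)
  qed
  have geq: "\<forall>n\<ge>Suc N. - lap g n + V n * g n = 0"
  proof (intro allI impI)
    fix n assume n: "n \<ge> Suc N"
    then obtain k where k: "n = Suc k" "k \<ge> N" by (cases n) auto
    define A1 where "A1 = fst (a (Suc k))"
    define A2 where "A2 = snd (a (Suc k))"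
    define b where "b = beta V V0 pm pp (Suc k)"
    define p where "p = pp (Suc k)"
    define m where "m = pm (Suc k)"
    define d1 where "d1 = b * (p*m*A1 + m\<^sup>2*A2)"
    define d2 where "d2 = b * (- (p\<^sup>2) * A1 - p*m*A2)"
    have Sk: "Suc k \<ge> N" using k by simp
    have a2: "fst (a (Suc (Suc k))) = A1 + d1" "snd (a (Suc (Suc k))) = A2 + d2"
      using ps[OF Sk] ms[OF Sk]
      by (simp_all add: A1_def A2_def d1_def d2_def b_def p_def m_def M_plus_term_def M_minus_term_def)
    have pp2: "pp (Suc (Suc k)) = (2 + V0 (Suc k)) * p - pp k"
      using rec_step[OF sol_p, of k] by (simp add: p_def)
    have pm2: "pm (Suc (Suc k)) = (2 + V0 (Suc k)) * m - pm k"
      using rec_step[OF sol_m, of k] by (simp add: m_def)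
    have Wk: "m * pp (Suc (Suc k)) - pm (Suc (Suc k)) * p = W"
      using W_const[of "Suc k"] by (simp add: m_def p_def)
    have bW: "b * W = V (Suc k) - V0 (Suc k)" using basis by (simp add: b_def beta_def)
    define g1 where "g1 = A1 * p + A2 * m"
    have g1: "g (Suc k) = g1" by (simp add: g_def g1_def A1_def A2_def p_def m_def)
    have g0: "g k = A1 * pp k + A2 * pm k" using gsh[OF k(2)] by (simp add: A1_def A2_def)
    have d: "d1 * pp (Suc (Suc k)) + d2 * pm (Suc (Suc k)) = b * g1 * (m * pp (Suc (Suc k)) - pm (Suc (Suc k)) * p)"
      by (simp add: d1_def d2_def g1_def algebra_simps power2_eq_square)
    also have "\<dots> = (b * W) * g1" unfolding Wk by (simp add: algebra_simps)
    also have "\<dots> = (V (Suc k) - V0 (Suc k)) * g1" unfolding bW ..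
    finally have d': "d1 * pp (Suc (Suc k)) + d2 * pm (Suc (Suc k)) = (V (Suc k) - V0 (Suc k)) * g1" .
    have "g (Suc (Suc k)) = A1 * pp (Suc (Suc k)) + A2 * pm (Suc (Suc k))
        + (d1 * pp (Suc (Suc k)) + d2 * pm (Suc (Suc k)))"
      using a2 by (simp add: g_def algebra_simps)
    also have "\<dots> = A1 * pp (Suc (Suc k)) + A2 * pm (Suc (Suc k)) + (V (Suc k) - V0 (Suc k)) * g1"
      by (simp only: d')
    also have "\<dots> = (2 + V (Suc k)) * g1 - g k"
      unfolding g0 pp2 pm2 g1_def by (simp add: algebra_simps)
    finally have g2: "g (Suc (Suc k)) = (2 + V (Suc k)) * g1 - g k" .
    show "- lap g n + V n * g n = 0"
      using g2 g1 k(1) by (simp add: lap_def algebra_simps)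
  qed
  obtain psi where psi: "solves V psi" "\<forall>n\<ge>N. psi n = g n"
    using extend[of N V] geq by blast
  have coef: "coeff_plus pm pp psi n = fst (a n) \<and> coeff_minus pm pp psi n = snd (a n)"
    if n: "n \<ge> Suc N" for n
  proof -
    obtain k where k: "n = Suc k" "k \<ge> N" using n by (cases n) auto
    have e1: "psi (Suc k) = fst (a (Suc k)) * pp (Suc k) + snd (a (Suc k)) * pm (Suc k)"
      using psi(2) k by (simp add: g_def)
    have e0: "psi k = fst (a (Suc k)) * pp k + snd (a (Suc k)) * pm k"
      using psi(2) k gsh[OF k(2)] by simp
    have Wk: "pm k * pp (Suc k) - pm (Suc k) * pp k = W" by (rule W_const)
    have "pm k * psi (Suc k) - pm (Suc k) * psi k = fst (a (Suc k)) * W"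
      unfolding e0 e1 Wk[symmetric] by (simp add: algebra_simps)
    moreover have "psi k * pp (Suc k) - psi (Suc k) * pp k = snd (a (Suc k)) * W"
      unfolding e0 e1 Wk[symmetric] by (simp add: algebra_simps)
    ultimately show ?thesis using basis k(1) by (simp add: coeff_plus_def coeff_minus_def)
  qed
  define c2 where "c2 = (pp N)^2"
  have c2: "c2 > 0" using pp_nz[OF N(1)] by (simp add: c2_def)
  have ppn: "c2 \<le> (pp n)^2" if "n \<ge> N" for n
    using mono N(1) that unfolding c2_def by (metis abs_ge_zero less_imp_le power2_abs power_mono)
  have cp: "\<bar>coeff_plus pm pp psi n\<bar> \<le> (2*B/c2) * T n" if n: "n \<ge> Suc N" for n
  proof -
    have n': "n \<ge> N" using n by simp
    have "c2 * \<bar>fst (M_op V V0 pm pp a n)\<bar> \<le> (pp n)^2 * \<bar>fst (M_op V V0 pm pp a n)\<bar>"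
      using ppn[OF n'] by (simp add: mult_right_mono)
    also have "\<dots> \<le> 2*B*T n" using es(3)[OF n'] .
    finally have "\<bar>fst (M_op V V0 pm pp a n)\<bar> \<le> (2*B/c2) * T n"
      using c2 by (simp add: field_simps)
    then show ?thesis using coef[OF n] fa n' by simp
  qed
  have cm: "\<bar>coeff_minus pm pp psi n - 1\<bar> \<le> 2*B * T n" if n: "n \<ge> Suc N" for n
  proof -
    have n': "n \<ge> N" using n by simp
    show ?thesis using es(4)[OF n'] coef[OF n] sa n' by simp
  qed
  have Tc: "(\<lambda>n. c * T n) \<longlonglongrightarrow> 0" for c
    using tendsto_mult[OF tendsto_const T_lim, of c] by simp
  have L1: "coeff_plus pm pp psi \<longlonglongrightarrow> 0"
    by (rule Lim_null_comparison[OF _ Tc[of "2*B/c2"]])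
       (use cp in \<open>auto simp: eventually_sequentially intro!: exI[of _ "Suc N"]\<close>)
  have "(\<lambda>n. coeff_minus pm pp psi n - 1) \<longlonglongrightarrow> 0"
    by (rule Lim_null_comparison[OF _ Tc[of "2*B"]])
       (use cm in \<open>auto simp: eventually_sequentially intro!: exI[of _ "Suc N"]\<close>)
  then have L2: "coeff_minus pm pp psi \<longlonglongrightarrow> 1" by (rule LIM_zero_cancel)
  define r where "r n = (psi n - pm n) / psi_hat pm n" for n
  have rdef: "psi n = pm n + r n * psi_hat pm n" for n
    using hat_pos[of n] by (simp add: r_def)
  have rb: "\<bar>r n\<bar> \<le> (4*B) * T n" if n: "n \<ge> Suc N" for n
  proof -
    have n': "n \<ge> N" using n by simp
    have H: "psi_hat pm n > 0" by (rule hat_pos)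
    have hm: "\<bar>pm n\<bar> \<le> psi_hat pm n" by (rule hat_ge) simp
    have "psi n - pm n = - (pp n * fst (M_op V V0 pm pp a n)) - snd (M_op V V0 pm pp a n) * pm n"
      using psi(2) n' coef[OF n] fa sa by (simp add: g_def algebra_simps)
    then have "\<bar>psi n - pm n\<bar> \<le> \<bar>pp n * fst (M_op V V0 pm pp a n)\<bar> + \<bar>snd (M_op V V0 pm pp a n)\<bar> * \<bar>pm n\<bar>"
      by (simp add: abs_mult[symmetric])
    also have "\<dots> \<le> 2*B*psi_hat pm n*T n + (2*B*T n) * psi_hat pm n"
      using es(5)[OF n'] es(4)[OF n'] hm B0 T_nonneg[of n]
      by (intro add_mono mult_mono) auto
    also have "\<dots> = (4*B*T n) * psi_hat pm n" by (simp add: algebra_simps)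
    finally show ?thesis using H by (simp add: r_def abs_divide pos_divide_le_eq)
  qed
  have L3: "r \<longlonglongrightarrow> 0"
    by (rule Lim_null_comparison[OF _ Tc[of "4*B"]])
       (use rb in \<open>auto simp: eventually_sequentially intro!: exI[of _ "Suc N"]\<close>)
  show ?thesis using that[OF psi(1) L1 L2] L3 rdef by blast
qed

end


context setting begin

lemma div_lin: "(A - c * B) / (W::real) = A / W - c * (B / W)"
  by (simp add: diff_divide_distrib)

lemma coeff_lin:
  "coeff_plus pm pp (\<lambda>n. f n - c * g n) n = coeff_plus pm pp f n - c * coeff_plus pm pp g n"
  "coeff_minus pm pp (\<lambda>n. f n - c * g n) n = coeff_minus pm pp f n - c * coeff_minus pm pp g n"
proof -
  have "pm (n-1) * (f n - c * g n) - pm n * (f (n-1) - c * g (n-1))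
      = (pm (n-1) * f n - pm n * f (n-1)) - c * (pm (n-1) * g n - pm n * g (n-1))"
    by (simp add: algebra_simps)
  then show "coeff_plus pm pp (\<lambda>n. f n - c * g n) n = coeff_plus pm pp f n - c * coeff_plus pm pp g n"
    unfolding coeff_plus_def by (simp only: div_lin)
  have "(f (n-1) - c * g (n-1)) * pp n - (f n - c * g n) * pp (n-1)
      = (f (n-1) * pp n - f n * pp (n-1)) - c * (g (n-1) * pp n - g n * pp (n-1))"
    by (simp add: algebra_simps)
  then show "coeff_minus pm pp (\<lambda>n. f n - c * g n) n = coeff_minus pm pp f n - c * coeff_minus pm pp g n"
    unfolding coeff_minus_def by (simp only: div_lin)
qed

lemma ident_alg:
  fixes W m0 m1 p0 p1 D0 D1 q0 q1 :: real
  assumes "W = m0*p1 - m1*p0" "W \<noteq> 0"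
  shows "D0*q1 - D1*q0 = W * (((D0*p1 - D1*p0)/W) * ((m0*q1 - m1*q0)/W) - ((m0*D1 - m1*D0)/W) * ((q0*p1 - q1*p0)/W))"
proof -
  have key: "(D0*p1 - D1*p0)*(m0*q1 - m1*q0) - (m0*D1 - m1*D0)*(q0*p1 - q1*p0) = (D0*q1 - D1*q0) * W"
    unfolding assms(1) by (simp add: algebra_simps)
  have "W * (((D0*p1 - D1*p0)/W) * ((m0*q1 - m1*q0)/W) - ((m0*D1 - m1*D0)/W) * ((q0*p1 - q1*p0)/W))
     = ((D0*p1 - D1*p0)*(m0*q1 - m1*q0) - (m0*D1 - m1*D0)*(q0*p1 - q1*p0)) / W"
    using assms(2) by (simp add: field_simps power2_eq_square)
  also have "\<dots> = D0*q1 - D1*q0" unfolding key using assms(2) by simp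
  finally show ?thesis by simp
qed

lemma uniq:
  assumes psi: "solves V psi" "coeff_plus pm pp psi \<longlonglongrightarrow> 0" "coeff_minus pm pp psi \<longlonglongrightarrow> 1"
    and psi': "solves V psi'" "coeff_plus pm pp psi' \<longlonglongrightarrow> 0" "coeff_minus pm pp psi' \<longlonglongrightarrow> 1"
  shows "psi' = psi"
proof -
  define D where "D = (\<lambda>n. psi' n - 1 * psi n)"
  have sD: "solves V D" unfolding D_def by (rule solves_lin[OF psi'(1) psi(1)])
  have cpD: "coeff_plus pm pp D \<longlonglongrightarrow> 0"
    unfolding D_def coeff_lin using tendsto_diff[OF psi'(2) psi(2)] by simp
  have cmD: "coeff_minus pm pp D \<longlonglongrightarrow> 0"
    unfolding D_def coeff_lin using tendsto_diff[OF psi'(3) psi(3)] by simp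
  define c0 where "c0 = D 0 * psi 1 - D 1 * psi 0"
  have wr: "D n * psi (Suc n) - D (Suc n) * psi n = c0" for n
    unfolding c0_def by (rule wr_const[OF sD psi(1)])
  have ident: "D k * psi (Suc k) - D (Suc k) * psi k
     = W * (coeff_minus pm pp D (Suc k) * coeff_plus pm pp psi (Suc k)
            - coeff_plus pm pp D (Suc k) * coeff_minus pm pp psi (Suc k))" for k
  proof -
    have Wk: "W = pm k * pp (Suc k) - pm (Suc k) * pp k" by (rule W_const[symmetric])
    show ?thesis unfolding coeff_plus_def coeff_minus_def diff_Suc_1
      by (rule ident_alg[OF Wk basis])
  qed
  have t1: "(\<lambda>k. coeff_minus pm pp D (Suc k)) \<longlonglongrightarrow> 0" using LIMSEQ_Suc[OF cmD] .
  have t2: "(\<lambda>k. coeff_plus pm pp D (Suc k)) \<longlonglongrightarrow> 0" using LIMSEQ_Suc[OF cpD] .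
  have t3: "(\<lambda>k. coeff_plus pm pp psi (Suc k)) \<longlonglongrightarrow> 0" using LIMSEQ_Suc[OF psi(2)] .
  have t4: "(\<lambda>k. coeff_minus pm pp psi (Suc k)) \<longlonglongrightarrow> 1" using LIMSEQ_Suc[OF psi(3)] .
  have "(\<lambda>k. W * (coeff_minus pm pp D (Suc k) * coeff_plus pm pp psi (Suc k)
            - coeff_plus pm pp D (Suc k) * coeff_minus pm pp psi (Suc k))) \<longlonglongrightarrow> W * (0 * 0 - 0 * 1)"
    using tendsto_mult[OF tendsto_const tendsto_diff[OF tendsto_mult[OF t1 t3] tendsto_mult[OF t2 t4]], of W] .
  moreover have "(\<lambda>k. W * (coeff_minus pm pp D (Suc k) * coeff_plus pm pp psi (Suc k)
            - coeff_plus pm pp D (Suc k) * coeff_minus pm pp psi (Suc k))) = (\<lambda>k. c0)"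
  proof (rule ext)
    fix k show "W * (coeff_minus pm pp D (Suc k) * coeff_plus pm pp psi (Suc k)
            - coeff_plus pm pp D (Suc k) * coeff_minus pm pp psi (Suc k)) = c0"
      using ident[of k] wr[of k] by linarith
  qed
  ultimately have "(\<lambda>k. c0) \<longlonglongrightarrow> 0" by simp
  then have c00: "c0 = 0" by (rule LIMSEQ_const_iff[THEN iffD1])
  obtain k where k: "psi k \<noteq> 0"
  proof (rule ccontr)
    assume "\<not> thesis"
    then have "\<forall>k. psi k = 0" using that by blast
    then have "coeff_minus pm pp psi = (\<lambda>n. 0)" by (simp add: coeff_minus_def fun_eq_iff)
    then have "(\<lambda>n. 0::real) \<longlonglongrightarrow> 1" using psi(3) by simp
    then show False by (simp add: LIMSEQ_const_iff)
  qed
  define \<alpha> where "\<alpha> = D k / psi k"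
  define E where "E = (\<lambda>n. D n - \<alpha> * psi n)"
  have sE: "solves V E" unfolding E_def by (rule solves_lin[OF sD psi(1)])
  have E0: "E k = 0" using k by (simp add: E_def \<alpha>_def)
  have E1: "E (Suc k) = 0"
  proof -
    have "D k * psi (Suc k) = D (Suc k) * psi k" using wr[of k] c00 by simp
    then show ?thesis using k by (simp add: E_def \<alpha>_def field_simps)
  qed
  have DE: "D n = \<alpha> * psi n" for n
    using sol_zero[OF sE E0 E1, of n] by (simp add: E_def)
  have "coeff_minus pm pp D n = \<alpha> * coeff_minus pm pp psi n" for n
    unfolding coeff_minus_def DE by (simp add: algebra_simps diff_divide_distrib)
  then have "coeff_minus pm pp D = (\<lambda>n. \<alpha> * coeff_minus pm pp psi n)" by (rule ext)
  then have "coeff_minus pm pp D \<longlonglongrightarrow> \<alpha> * 1"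
    using tendsto_mult[OF tendsto_const psi(3), of \<alpha>] by simp
  then have "\<alpha> = 0" using LIMSEQ_unique[OF _ cmD] by simp
  then have "\<forall>n. D n = 0" using DE by simp
  then show ?thesis by (auto simp: D_def fun_eq_iff)
qed

end

theorem theorem2:
  fixes V V0 pm pp :: "nat \<Rightarrow> real"
  assumes sol_m: "solves V0 pm" and sol_p: "solves V0 pp"
    and basis: "wronskian pm pp \<noteq> 0"
    and lim_m: "pm \<longlonglongrightarrow> 0"
    and mono_p: "\<exists>n0. \<forall>n m. n0 \<le> n \<longrightarrow> n \<le> m \<longrightarrow> \<bar>pp n\<bar> \<le> \<bar>pp m\<bar>"
    and l1: "summable (\<lambda>n. \<bar>beta V V0 pm pp n * (1 + \<bar>pp n * pm n\<bar>\<^sup>2)\<bar>)"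
  shows "(\<exists>N0. \<forall>N\<ge>N0. M_contraction_on_BN V V0 pm pp N)
    \<and> (\<exists>psi. solves V psi
           \<and> coeff_plus pm pp psi \<longlonglongrightarrow> 0 \<and> coeff_minus pm pp psi \<longlonglongrightarrow> 1
           \<and> (\<forall>psi'. solves V psi' \<and> coeff_plus pm pp psi' \<longlonglongrightarrow> 0
                      \<and> coeff_minus pm pp psi' \<longlonglongrightarrow> 1 \<longrightarrow> psi' = psi)
           \<and> (\<exists>r. r \<longlonglongrightarrow> 0 \<and> (\<forall>n. psi n = pm n + r n * psi_hat pm n)))"
proof -
  obtain n0 where mono: "\<forall>n m. n0 \<le> n \<longrightarrow> n \<le> m \<longrightarrow> \<bar>pp n\<bar> \<le> \<bar>pp m\<bar>" using mono_p by blast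
  interpret S: setting V V0 pm pp n0
    using sol_m sol_p basis lim_m mono l1 by unfold_locales
  have part1: "\<exists>N0. \<forall>N\<ge>N0. M_contraction_on_BN V V0 pm pp N"
  proof -
    have "eventually (\<lambda>n. S.T n < 1/8) sequentially"
      using order_tendstoD(2)[OF S.T_lim, of "1/8"] by simp
    then obtain M where M: "\<forall>n\<ge>M. S.T n < 1/8" by (auto simp: eventually_sequentially)
    show ?thesis
    proof (intro exI[of _ "max M (Suc n0)"] allI impI)
      fix N assume N: "N \<ge> max M (Suc n0)"
      then have "S.T N < 1/8" using M by auto
      moreover have "n0 < N" using N by auto
      ultimately show "M_contraction_on_BN V V0 pm pp N" by (intro S.contraction) auto
    qed
  qed
  obtain psi where psi: "solves V psi" "coeff_plus pm pp psi \<longlonglongrightarrow> 0" "coeff_minus pm pp psi \<longlonglongrightarrow> 1"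
    "\<exists>r. r \<longlonglongrightarrow> 0 \<and> (\<forall>n. psi n = pm n + r n * psi_hat pm n)"
    by (rule S.existence)
  show ?thesis
    using part1 psi S.uniq[OF psi(1-3)] by blast
qed


end
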